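(* Let $n\ge2$ and let $\varphi$ be a skew morphism of $\mathbb{Z}_n$ with even complexity and auto-order $m$. Then $\varphi$ is uniquely determined by the triple $(\varphi(1),\varphi',\varphi|_{\langle m\rangle})$: if $\psi$ is any skew morphism of $\mathbb{Z}_n$ with even complexity such that $\psi(1)=\varphi(1)$, $\psi'=\varphi'$ and $\psi(x)=\varphi(x)$ for all $x$ in the subgroup $\langle m\rangle$ of $\mathbb{Z}_n$, then $\psi=\varphi$.
   Context: $\mathbb{Z}_n$ is the cyclic group of integers modulo $n$; $\langle m\rangle$ is the subgroup generated by $m$. A skew morphism of a finite group $G$ is a permutation $\varphi$ of $G$ fixing the identity such that for each $a\in G$ there is a non-negative integer $i_a$ with $\varphi(ab)=\varphi(a)\varphi^{i_a}(b)$ for all $b\in G$. ${\rm ord}(\varphi)$ is the order of $\langle\varphi\rangle$. If $\varphi$ is non-trivial, $\pi_\varphi(a)$ is the unique such $i_a\in\{1,\dots,{\rm ord}(\varphi)-1\}$; if $\varphi$ is the identity, $\pi_\varphi(a)=1$. Let $\sigma_\varphi(x,y)=\sum_{i=0}^{x-1}\pi_\varphi(\varphi^i(y))\in\mathbb{Z}_{{\rm ord}(\varphi)}$. The derived skew morphism $\varphi'$ of a skew morphism $\varphi$ of $\mathbb{Z}_n$ is the skew morphism of $\mathbb{Z}_{{\rm ord}(\varphi)}$ given by $\varphi'(a)=\sigma_\varphi(a,1)$. Set $\varphi^{(0)}=\varphi$, $\varphi^{(i+1)}=(\varphi^{(i)})'$. For $n\ge 2$ the complexity of $\varphi$ is the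 unique non-negative integer $c$ such that $\varphi^{(c)}$ is a skew morphism of a non-trivial cyclic group $\mathbb{Z}_m$ and $\varphi^{(c+1)}$ is a skew morphism of $\mathbb{Z}_1$; $m$ is the auto-order of $\varphi$. (When the complexity is even, $m$ divides $n$ and $\varphi$ maps $\langle m\rangle$ onto itself.) *)

theory Defs
  imports Main
begin

text \<open>Z_n is represented by the natural numbers {0..<n} with addition mod n.
A map Z_n -> Z_n is a function nat => nat; only its values on {..<n} matter.\<close>

definition skew :: "nat \<Rightarrow> (nat \<Rightarrow> nat) \<Rightarrow> bool" where
  "skew n f \<longleftrightarrow> bij_betw f {..<n} {..<n} \<and> f 0 = 0 \<and>
     (\<forall>a<n. \<exists>i. \<forall>b<n. f ((a + b) mod n) = (f a + (f ^^ i) b) mod n)"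

definition sord :: "nat \<Rightarrow> (nat \<Rightarrow> nat) \<Rightarrow> nat" where
  "sord n f = (LEAST k. 0 < k \<and> (\<forall>x<n. (f ^^ k) x = x))"

definition spi :: "nat \<Rightarrow> (nat \<Rightarrow> nat) \<Rightarrow> nat \<Rightarrow> nat" where
  "spi n f a = (if (\<forall>x<n. f x = x) then 1 else
     (THE i. 1 \<le> i \<and> i < sord n f \<and>
        (\<forall>b<n. f ((a + b) mod n) = (f a + (f ^^ i) b) mod n)))"

definition ssigma :: "nat \<Rightarrow> (nat \<Rightarrow> nat) \<Rightarrow> nat \<Rightarrow> nat \<Rightarrow> nat" where
  "ssigma n f x y = (\<Sum>i<x. spi n f ((f ^^ i) y)) mod sord n f"

text \<open>derived skew morphism: a map of Z_(sord n f)\<close>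
definition derived :: "nat \<Rightarrow> (nat \<Rightarrow> nat) \<Rightarrow> (nat \<Rightarrow> nat)" where
  "derived n f = (\<lambda>a. ssigma n f a (1 mod n))"

text \<open>k-th derived skew morphism together with the order of its underlying group\<close>
fun deriv_iter :: "nat \<Rightarrow> nat \<Rightarrow> (nat \<Rightarrow> nat) \<Rightarrow> nat \<times> (nat \<Rightarrow> nat)" where
  "deriv_iter 0 n f = (n, f)"
| "deriv_iter (Suc k) n f =
     (let (m, g) = deriv_iter k n f in (sord m g, derived m g))"

definition complexity :: "nat \<Rightarrow> (nat \<Rightarrow> nat) \<Rightarrow> nat" where
  "complexity n f = (THE c. 2 \<le> fst (deriv_iter c n f) \<and> fst (deriv_iter (Suc c) n f) = 1)"

definition auto_order :: "nat \<Rightarrow> (nat \<Rightarrow> nat) \<Rightarrow> nat" where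
  "auto_order n f = fst (deriv_iter (complexity n f) n f)"

definition cyc_subgroup :: "nat \<Rightarrow> nat \<Rightarrow> nat set" where
  "cyc_subgroup n m = {x. \<exists>k. x = (k * m) mod n}"

end

theory Submission
  imports Defs "HOL-Library.FuncSet" "HOL-Number_Theory.Cong"
begin

lemma funpow_add_apply: "(f^^(m+k)) x = (f^^m) ((f^^k) x)"
  by (simp add: funpow_add)

lemma mod_cancel_lt:
  fixes n x y c :: nat
  assumes "x < n" "y < n" "(c + x) mod n = (c + y) mod n"
  shows "x = y"
proof -
  have "[c + x = c + y] (mod n)" using assms(3) by (simp add: cong_def)
  hence "[x = y] (mod n)" using cong_add_lcancel_nat by blast
  thus ?thesis using assms(1,2) by (simp add: cong_def)
qed

lemma sum_split_add: "(\<Sum>i<x+b. f i) = (\<Sum>i<x. f i) + (\<Sum>i<b. f (x+i))" for f :: "nat \<Rightarrow> nat"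
  by (induction b) auto

locale sk =
  fixes n :: nat and p :: "nat \<Rightarrow> nat"
  assumes skew: "skew n p" and n2: "2 \<le> n"
begin

abbreviation "r \<equiv> sord n p"
definition S :: "nat \<Rightarrow> nat \<Rightarrow> nat" where "S k a = (\<Sum>i<k. spi n p ((p^^i) a))"
abbreviation "d \<equiv> derived n p"

lemma p_lt: "x < n \<Longrightarrow> p x < n"
  using skew unfolding skew_def bij_betw_def by auto
lemma p0: "p 0 = 0"
  using skew unfolding skew_def by auto
lemma p_inj: "inj_on p {..<n}"
  using skew unfolding skew_def bij_betw_def by auto
lemma pow_lt: "x < n \<Longrightarrow> (p^^k) x < n"
  by (induction k) (auto simp: p_lt)
lemma pow0: "(p^^k) 0 = 0"
  by (induction k) (auto simp: p0)
lemma pow_inj: "x < n \<Longrightarrow> y < n \<Longrightarrow> (p^^k) x = (p^^k) y \<Longrightarrow> x = y"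
proof (induction k)
  case (Suc k)
  have "(p^^k) x = (p^^k) y"
    using Suc.prems p_inj pow_lt by (auto simp: inj_on_def)
  thus ?case using Suc by auto
qed auto

lemma ex_order: "\<exists>k>0. \<forall>x<n. (p^^k) x = x"
proof -
  let ?F = "\<lambda>k. restrict (p^^k) {..<n}"
  have "range ?F \<subseteq> {..<n} \<rightarrow>\<^sub>E {..<n}" using pow_lt by (intro image_subsetI, subst restrict_PiE_iff) simp
  hence "finite (range ?F)"
    by (rule finite_subset) (auto intro: finite_PiE)
  hence "\<not> inj ?F" using finite_imageD infinite_UNIV_nat by blast
  then obtain i j where ij: "i \<noteq> j" "?F i = ?F j" unfolding inj_def by auto
  have key: "\<exists>k>0. \<forall>x<n. (p^^k) x = x" if "i < j" "?F i = ?F j" for i j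
  proof (intro exI[of _ "j - i"] conjI allI impI)
    show "0 < j - i" using that by auto
    fix x assume x: "x < n"
    have "(p^^i) x = (p^^j) x" using fun_cong[OF that(2), of x] x by auto
    also have "\<dots> = (p^^i) ((p^^(j-i)) x)"
      using that(1) funpow_add_apply[where f=p and m=i and k="j-i" and x=x] by simp
    finally show "(p^^(j-i)) x = x" using pow_inj pow_lt x by metis
  qed
  show ?thesis
  proof (cases "i < j")
    case True thus ?thesis using key ij by blast
  next
    case False thus ?thesis using key[of j i] ij by auto
  qed
qed

lemma r_prop: "0 < r \<and> (\<forall>x<n. (p^^r) x = x)"
  unfolding sord_def by (rule LeastI_ex) (use ex_order in auto)

lemma r_pos: "0 < r" using r_prop by auto
lemma r_id: "x < n \<Longrightarrow> (p^^r) x = x" using r_prop by auto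

lemma r_min: "0 < k \<Longrightarrow> k < r \<Longrightarrow> \<exists>x<n. (p^^k) x \<noteq> x"
  using not_less_Least[of k "\<lambda>k. 0 < k \<and> (\<forall>x<n. (p^^k) x = x)"] unfolding sord_def by auto

lemma pow_mult_r: "x < n \<Longrightarrow> (p^^(r*q)) x = x"
proof (induction q)
  case (Suc q)
  have "(p^^(r*Suc q)) x = (p^^r) ((p^^(r*q)) x)"
    by (simp add: funpow_add_apply[symmetric] mult_Suc_right)
  thus ?case using Suc r_id by simp
qed simp

lemma pow_mod: "x < n \<Longrightarrow> (p^^k) x = (p^^(k mod r)) x"
proof -
  assume x: "x < n"
  have "(p^^k) x = (p^^(k mod r + r*(k div r))) x" by simp
  also have "\<dots> = (p^^(k mod r)) x" using funpow_add_apply pow_mult_r x by metis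
  finally show ?thesis .
qed

lemma pow_eq_aux:
  assumes "b \<le> a" "a < r" "\<forall>x<n. (p^^a) x = (p^^b) x"
  shows "a = b"
proof (rule ccontr)
  assume "a \<noteq> b"
  hence pos: "0 < a - b" "a - b < r" using assms by auto
  have "\<forall>x<n. (p^^(a-b)) x = x"
  proof (intro allI impI)
    fix x assume x: "x < n"
    have "(p^^b) ((p^^(a-b)) x) = (p^^a) x"
      using assms(1) funpow_add_apply[where f=p and m=b and k="a-b" and x=x] by simp
    also have "\<dots> = (p^^b) x" using assms(3) x by auto
    finally show "(p^^(a-b)) x = x" using pow_inj pow_lt x by metis
  qed
  thus False using r_min[OF pos] by auto
qed

lemma pow_eq_mod:
  assumes "\<forall>x<n. (p^^u) x = (p^^v) x"
  shows "u mod r = v mod r"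
proof -
  have h: "\<forall>x<n. (p^^(u mod r)) x = (p^^(v mod r)) x" using assms pow_mod by metis
  have lt: "u mod r < r" "v mod r < r" using r_pos by auto
  show ?thesis
  proof (cases "v mod r \<le> u mod r")
    case True thus ?thesis using pow_eq_aux[OF True lt(1) h] by simp
  next
    case False thus ?thesis using pow_eq_aux[of "u mod r" "v mod r"] lt h by auto
  qed
qed


lemma spi_prop:
  assumes a: "a < n" and b: "b < n"
  shows "p ((a+b) mod n) = (p a + (p^^spi n p a) b) mod n"
proof (cases "\<forall>x<n. p x = x")
  case True
  hence "spi n p a = 1" unfolding spi_def by simp
  moreover have "p ((a+b) mod n) = (a+b) mod n" using True n2 by auto
  ultimately show ?thesis using True a b by simp
next
  case False
  let ?P = "\<lambda>i. 1 \<le> i \<and> i < r \<and> (\<forall>b<n. p ((a + b) mod n) = (p a + (p ^^ i) b) mod n)"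
  obtain i where i: "\<forall>b<n. p ((a + b) mod n) = (p a + (p ^^ i) b) mod n"
    using skew a unfolding skew_def by blast
  have i': "\<forall>b<n. p ((a + b) mod n) = (p a + (p ^^ (i mod r)) b) mod n"
    using i pow_mod by metis
  have nz: "i mod r \<noteq> 0"
  proof
    assume z: "i mod r = 0"
    hence tr: "\<forall>b<n. p ((a + b) mod n) = (p a + b) mod n" using i' by simp
    have pa: "p a = a"
    proof (cases "a = 0")
      case True thus ?thesis using p0 by simp
    next
      case False
      have "n - a < n" using False a by simp
      hence "p ((a + (n - a)) mod n) = (p a + (n - a)) mod n" using tr by blast
      hence "(p a + (n - a)) mod n = 0" using a p0 by simp
      moreover have "p a < n" using p_lt a by simp
      ultimately show "p a = a"
      proof (cases "a \<le> p a")
        case True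
        hence "p a + (n - a) = (p a - a) + n" using a by simp
        hence "(p a - a) mod n = 0" using \<open>(p a + (n - a)) mod n = 0\<close> by simp
        thus ?thesis using True \<open>p a < n\<close> by simp
      next
        case F: False
        hence "p a + (n - a) < n" "0 < p a + (n - a)" using a by auto
        thus ?thesis using \<open>(p a + (n - a)) mod n = 0\<close> by simp
      qed
    qed
    have "\<forall>y<n. p y = y"
    proof (intro allI impI)
      fix y assume y: "y < n"
      define b where "b = (y + (n - a)) mod n"
      have bn: "b < n" using n2 b_def by simp
      have "(a + b) mod n = (a + (y + (n - a))) mod n" unfolding b_def by (simp add: mod_add_right_eq)
      also have "a + (y + (n - a)) = y + n" using a by simp
      finally have "(a + b) mod n = y" using y by simp
      thus "p y = y" using tr bn pa by (metis)
    qed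
    thus False using False by simp
  qed
  have ex: "?P (i mod r)" using nz i' r_pos by auto
  have uq: "j = i mod r" if "?P j" for j
  proof -
    have "\<forall>x<n. (p^^j) x = (p^^(i mod r)) x"
    proof (intro allI impI)
      fix x assume x: "x < n"
      have "(p a + (p^^j) x) mod n = (p a + (p^^(i mod r)) x) mod n"
        using that ex x by metis
      thus "(p^^j) x = (p^^(i mod r)) x" using mod_cancel_lt pow_lt x by metis
    qed
    hence "j mod r = i mod r mod r" by (rule pow_eq_mod)
    thus ?thesis using that by simp
  qed
  have "spi n p a = (THE i. ?P i)" unfolding spi_def by (rule if_not_P[OF False])
  also have "\<dots> = i mod r" using ex uq by (rule the_equality)
  finally show ?thesis using i' b by simp
qed

lemma S_Suc: "S (Suc k) a = S k a + spi n p ((p^^k) a)"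
  unfolding S_def by simp

lemma Spow:
  assumes a: "a < n" and b: "b < n"
  shows "(p^^k) ((a+b) mod n) = ((p^^k) a + (p^^(S k a)) b) mod n"
proof (induction k)
  case 0 thus ?case by (simp add: S_def)
next
  case (Suc k)
  have "(p^^Suc k) ((a+b) mod n) = p (((p^^k) a + (p^^(S k a)) b) mod n)"
    using Suc by simp
  also have "\<dots> = (p ((p^^k) a) + (p^^spi n p ((p^^k) a)) ((p^^(S k a)) b)) mod n"
    using spi_prop pow_lt a b by simp
  also have "(p^^spi n p ((p^^k) a)) ((p^^(S k a)) b) = (p^^(S (Suc k) a)) b"
    unfolding S_Suc by (simp add: funpow_add_apply[symmetric] add.commute)
  finally show ?case by simp
qed

lemma d_eq: "d k = S k 1 mod r"
  unfolding derived_def ssigma_def S_def using n2 by simp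

lemma d_lt: "d k < r" using d_eq r_pos by simp

lemma pow_S1: "x < n \<Longrightarrow> (p^^(S k 1)) x = (p^^(d k)) x"
  using pow_mod d_eq by metis

lemma I1a: "x < n \<Longrightarrow> (p^^k) ((1+x) mod n) = ((p^^k) 1 + (p^^(d k)) x) mod n"
  using Spow[of 1 x k] n2 pow_S1 by simp

lemma S_add: "S (k + l) a = S k a + S l ((p^^k) a)"
proof (induction l)
  case 0 thus ?case by (simp add: S_def)
next
  case (Suc l)
  have "(p^^(k+l)) a = (p^^l) ((p^^k) a)"
    using funpow_add_apply[where f=p and m=l and k=k and x=a] by (simp add: add.commute)
  thus ?case using Suc by (simp add: S_Suc)
qed

lemma S_r: "a < n \<Longrightarrow> S r a mod r = 0"
proof -
  assume a: "a < n"
  have "\<forall>x<n. (p^^(S r a)) x = (p^^0) x"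
  proof (intro allI impI)
    fix x assume x: "x < n"
    have "(a + x) mod n = (a + (p^^(S r a)) x) mod n"
      using Spow[OF a x, of r] r_id a x by (simp add: r_id)
    thus "(p^^(S r a)) x = (p^^0) x" using mod_cancel_lt pow_lt x by (metis funpow_0)
  qed
  hence "S r a mod r = 0 mod r" by (rule pow_eq_mod)
  thus ?thesis by simp
qed

lemma d_r: "d (r + j) = d j"
proof -
  have "S (r + j) 1 = S r 1 + S j 1" using S_add r_id n2 by simp
  hence "d (r + j) = (S r 1 mod r + S j 1) mod r" using d_eq by (simp add: mod_add_left_eq)
  thus ?thesis using d_eq S_r[of 1] n2 by simp
qed

lemma d_mod: "d k = d (k mod r)"
proof -
  have "d (r*q + j) = d j" for q j
    by (induction q) (simp_all add: mult_Suc_right add.assoc d_r)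
  thus ?thesis by (metis mod_mult_div_eq add.commute)
qed

lemma I1: "(p^^k) (x mod n) = (\<Sum>i<x. (p^^((d^^i) k)) 1) mod n"
proof (induction x arbitrary: k)
  case 0 thus ?case by (simp add: pow0)
next
  case (Suc x)
  have xl: "x mod n < n" using n2 by simp
  have "Suc x mod n = (1 + x mod n) mod n" by (simp add: mod_Suc_eq)
  hence "(p^^k) (Suc x mod n) = ((p^^k) 1 + (p^^(d k)) (x mod n)) mod n"
    using I1a[OF xl] by simp
  also have "\<dots> = ((p^^k) 1 + (\<Sum>i<x. (p^^((d^^i) (d k))) 1)) mod n"
    using Suc.IH[of "d k"] by (simp add: mod_add_right_eq)
  also have "(\<Sum>i<x. (p^^((d^^i) (d k))) 1) = (\<Sum>i<x. (p^^((d^^(Suc i)) k)) 1)"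
    by (simp add: funpow_Suc_right del: funpow.simps)
  also have "(p^^k) 1 + \<dots> = (\<Sum>i<Suc x. (p^^((d^^i) k)) 1)"
    by (simp only: sum.lessThan_Suc_shift) simp
  finally show ?case .
qed

lemma spi_d: "b < n \<Longrightarrow> p ((x + b) mod n) = (p (x mod n) + (p^^((d^^x) 1)) b) mod n"
proof -
  assume b: "b < n"
  let ?T = "\<lambda>i. (p^^((d^^i) 1)) 1"
  have "p ((x + b) mod n) = (p^^1) ((x+b) mod n)" by simp
  also have "\<dots> = (\<Sum>i<x+b. ?T i) mod n" by (rule I1)
  also have "\<dots> = ((\<Sum>i<x. ?T i) + (\<Sum>i<b. ?T (x+i))) mod n" by (simp add: sum_split_add)
  also have "(\<Sum>i<b. ?T (x+i)) = (\<Sum>i<b. (p^^((d^^i) ((d^^x) 1))) 1)"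
    by (simp add: funpow_add_apply add.commute)
  also have "((\<Sum>i<x. ?T i) + \<dots>) mod n = ((\<Sum>i<x. ?T i) mod n + (\<Sum>i<b. (p^^((d^^i) ((d^^x) 1))) 1) mod n) mod n"
    by (simp add: mod_add_eq)
  also have "(\<Sum>i<x. ?T i) mod n = p (x mod n)" using I1[of 1 x] by simp
  also have "(\<Sum>i<b. (p^^((d^^i) ((d^^x) 1))) 1) mod n = (p^^((d^^x) 1)) b"
    using I1[of "(d^^x) 1" b] b by simp
  finally show ?thesis .
qed

lemma spi_d1: "x < n \<Longrightarrow> b < n \<Longrightarrow> (p^^(spi n p x)) b = (p^^((d^^x) 1)) b"
  using spi_prop[of x b] spi_d[of b x] mod_cancel_lt pow_lt by (metis mod_less)

lemma spi_dn: "b < n \<Longrightarrow> (p^^((d^^n) 1)) b = p b"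
  using spi_d[of b n] p0 pow_lt by simp


lemma pow_dvd_fix: "k dvd a \<Longrightarrow> (p^^k) 1 = 1 \<Longrightarrow> (p^^a) 1 = 1"
proof -
  assume "k dvd a" "(p^^k) 1 = 1"
  then obtain q where q: "a = k*q" by auto
  have "(p^^(k*q)) 1 = 1"
  proof (induction q)
    case (Suc q)
    have "(p^^(k*Suc q)) 1 = (p^^k) ((p^^(k*q)) 1)"
      by (simp add: funpow_add_apply[symmetric] mult_Suc_right)
    thus ?case using Suc \<open>(p^^k) 1 = 1\<close> by simp
  qed simp
  thus ?thesis using q by simp
qed

lemma conj_dvd:
  assumes k: "0 < k" "k dvd r" "k dvd a" "(p^^k) 1 = 1"
  shows "k dvd S a 1"
proof -
  define s where "s = S a 1"
  have one: "1 < n" using n2 by simp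
  have pa1: "(p^^a) 1 = 1" using pow_dvd_fix k by blast
  have c: "(p^^a) ((1+x) mod n) = (1 + (p^^s) x) mod n" if "x < n" for x
    using Spow[OF one that, of a] pa1 s_def by simp
  have it: "(p^^(a*i)) ((1+x) mod n) = (1 + (p^^(s*i)) x) mod n" if "x < n" for x i
    using that
  proof (induction i arbitrary: x)
    case 0 thus ?case by simp
  next
    case (Suc i)
    have "(p^^(a*Suc i)) ((1+x) mod n) = (p^^a) ((p^^(a*i)) ((1+x) mod n))"
      by (simp add: funpow_add_apply[symmetric] mult_Suc_right)
    also have "\<dots> = (p^^a) ((1 + (p^^(s*i)) x) mod n)" using Suc by simp
    also have "\<dots> = (1 + (p^^s) ((p^^(s*i)) x)) mod n" using c pow_lt Suc.prems by simp
    also have "(p^^s) ((p^^(s*i)) x) = (p^^(s*Suc i)) x"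
      by (simp add: funpow_add_apply[symmetric] mult_Suc_right)
    finally show ?case .
  qed
  define g where "g = gcd a r"
  define i where "i = r div g"
  have gpos: "0 < g" using r_pos g_def by simp
  have ri: "r = g * i" using i_def g_def by simp
  have ipos: "0 < i" using ri r_pos by (cases i) auto
  have ag: "a = g * (a div g)" using g_def by simp
  have "a * i = (g * (a div g)) * i" using ag by simp
  also have "\<dots> = (g * i) * (a div g)" by (simp add: ac_simps)
  finally have "a * i = r * (a div g)" using ri by simp
  hence aid: "(p^^(a*i)) y = y" if "y < n" for y using pow_mult_r that by simp
  have "\<forall>x<n. (p^^(s*i)) x = (p^^0) x"
  proof (intro allI impI)
    fix x assume x: "x < n"
    have "(1 + x) mod n = (1 + (p^^(s*i)) x) mod n" using it[OF x, of i] aid[of "(1+x) mod n"] n2 by simp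
    hence "x = (p^^(s*i)) x" using mod_cancel_lt[OF x pow_lt[OF x]] by blast
    thus "(p^^(s*i)) x = (p^^0) x" by simp
  qed
  hence "(s*i) mod r = 0 mod r" by (rule pow_eq_mod)
  hence "g * i dvd s * i" using ri by auto
  hence "g dvd s" using ipos by simp
  moreover have "k dvd g" using k g_def by simp
  ultimately show ?thesis using s_def by (meson dvd_trans)
qed

lemma fix1:
  assumes k: "0 < k" "k dvd r" "(p^^k) 1 = 1"
  shows "\<forall>x<n. (p^^k) x = x"
proof -
  have Q: "\<forall>a. k dvd a \<longrightarrow> (p^^a) t = t \<and> (\<forall>x<n. \<exists>a'. k dvd a' \<and> (p^^a) ((t+x) mod n) = (t + (p^^a') x) mod n)"
    if "t < n" for t
    using that
  proof (induction t)
    case 0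
    show ?case
    proof (rule allI, rule impI, rule conjI)
      fix a assume ka: "k dvd a"
      show "(p^^a) 0 = 0" by (rule pow0)
      show "\<forall>x<n. \<exists>a'. k dvd a' \<and> (p^^a) ((0+x) mod n) = (0 + (p^^a') x) mod n"
      proof (intro allI impI)
        fix x assume x: "x < n"
        have "(p^^a) ((0+x) mod n) = (0 + (p^^a) x) mod n" using x pow_lt[OF x] by simp
        thus "\<exists>a'. k dvd a' \<and> (p^^a) ((0+x) mod n) = (0 + (p^^a') x) mod n" using ka by blast
      qed
    qed
  next
    case (Suc t)
    show ?case
    proof (rule allI, rule impI, rule conjI)
      fix a assume ka: "k dvd a"
      define s where "s = S a 1"
      have ks: "k dvd s" unfolding s_def by (rule conj_dvd[OF k(1,2) ka k(3)])
      have pa1: "(p^^a) 1 = 1" by (rule pow_dvd_fix[OF ka k(3)])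
      have tn: "t < n" using Suc.prems by simp
      have one: "1 < n" using n2 by simp
      have st: "(1 + t) mod n = Suc t" using Suc.prems by simp
      have IHs: "(p^^s) t = t \<and> (\<forall>x<n. \<exists>a'. k dvd a' \<and> (p^^s) ((t+x) mod n) = (t + (p^^a') x) mod n)"
        by (rule Suc.IH[OF tn, rule_format, OF ks])
      have "(p^^a) ((1 + t) mod n) = ((p^^a) 1 + (p^^(S a 1)) t) mod n"
        by (rule Spow[OF one tn])
      also have "(p^^(S a 1)) t = t" using IHs unfolding s_def by (rule conjunct1)
      finally show "(p^^a) (Suc t) = Suc t" using st pa1 by simp
      show "\<forall>x<n. \<exists>a'. k dvd a' \<and> (p^^a) ((Suc t + x) mod n) = (Suc t + (p^^a') x) mod n"
      proof (intro allI impI)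
        fix x assume x: "x < n"
        obtain a' where a': "k dvd a'" "(p^^s) ((t+x) mod n) = (t + (p^^a') x) mod n"
          using IHs x by blast
        have e: "(Suc t + x) mod n = (1 + (t + x) mod n) mod n" using mod_add_right_eq[of 1 "t+x" n] by simp
        have tx: "(t + x) mod n < n" using n2 by simp
        have "(p^^a) ((Suc t + x) mod n) = (p^^a) ((1 + (t + x) mod n) mod n)" by (rule arg_cong[OF e])
        also have "\<dots> = ((p^^a) 1 + (p^^(S a 1)) ((t + x) mod n)) mod n" by (rule Spow[OF one tx])
        also have "\<dots> = (1 + (p^^s) ((t + x) mod n)) mod n" using pa1 s_def by simp
        also have "\<dots> = (1 + (t + (p^^a') x) mod n) mod n" using a' by simp
        also have "\<dots> = (Suc t + (p^^a') x) mod n" using mod_add_right_eq[of 1 "t + (p^^a') x" n] by simp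
        finally have "(p^^a) ((Suc t + x) mod n) = (Suc t + (p^^a') x) mod n" .
        thus "\<exists>a'. k dvd a' \<and> (p^^a) ((Suc t + x) mod n) = (Suc t + (p^^a') x) mod n"
          using a'(1) by blast
      qed
    qed
  qed
  show ?thesis
  proof (intro allI impI)
    fix x assume x: "x < n"
    show "(p^^k) x = x" using Q[OF x, rule_format, OF dvd_refl] by (rule conjunct1)
  qed
qed

lemma orbit_aux:
  assumes "v \<le> u" "u < r" "(p^^u) 1 = (p^^v) 1"
  shows "u = v"
proof (rule ccontr)
  assume ne: "u \<noteq> v"
  define w where "w = u - v"
  have w: "0 < w" "w < r" using assms ne w_def by auto
  have one: "1 < n" using n2 by simp
  have "(p^^v) ((p^^w) 1) = (p^^v) 1"
    using assms funpow_add_apply[where f=p and m=v and k=w and x=1] w_def by simp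
  hence pw: "(p^^w) 1 = 1" using pow_inj[OF pow_lt[OF one] one] by blast
  define g where "g = gcd w r"
  obtain x y where xy: "w * x = r * y + g" using bezout_nat[of w r] w g_def by auto
  have "(p^^(w*x)) 1 = 1" using pow_dvd_fix[OF _ pw, of "w*x"] by simp
  moreover have "(p^^(r*y + g)) 1 = (p^^g) 1"
    using funpow_add_apply[where f=p and m=g and k="r*y" and x=1] pow_mult_r one pow_lt
    by (simp add: add.commute)
  ultimately have pg: "(p^^g) 1 = 1" using xy by simp
  have gpos: "0 < g" using g_def w by simp
  have "\<forall>x<n. (p^^g) x = (p^^0) x" using fix1[OF gpos _ pg] g_def by simp
  hence gm: "g mod r = 0 mod r" by (rule pow_eq_mod)
  have "g \<le> w" using g_def w gcd_le1_nat by simp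
  hence "g < r" using w by simp
  thus False using gpos gm by simp
qed

lemma orbit:
  assumes "(p^^u) 1 = (p^^v) 1"
  shows "u mod r = v mod r"
proof -
  have one: "1 < n" using n2 by simp
  have h: "(p^^(u mod r)) 1 = (p^^(v mod r)) 1" using assms pow_mod[OF one, of u] pow_mod[OF one, of v] by simp
  have lt: "u mod r < r" "v mod r < r" using r_pos by auto
  show ?thesis
  proof (cases "v mod r \<le> u mod r")
    case True thus ?thesis using orbit_aux[OF True lt(1) h] by simp
  next
    case False thus ?thesis using orbit_aux[of "u mod r" "v mod r"] lt h by auto
  qed
qed

lemma r_lt: "r < n"
proof -
  have one: "1 < n" using n2 by simp
  let ?f = "\<lambda>k. (p^^k) 1"
  have "inj_on ?f {..<r}"
  proof (rule inj_onI)
    fix u v assume "u \<in> {..<r}" "v \<in> {..<r}" "?f u = ?f v"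
    thus "u = v" using orbit[of u v] by simp
  qed
  moreover have "?f ` {..<r} \<subseteq> {1..<n}"
  proof
    fix y assume "y \<in> ?f ` {..<r}"
    then obtain k where y: "y = (p^^k) 1" by auto
    have "y \<noteq> 0" using y pow0 pow_inj[of 1 0 k] one by auto
    thus "y \<in> {1..<n}" using y pow_lt one by auto
  qed
  ultimately have "card {..<r} \<le> card {1..<n}" by (intro card_inj_on_le) auto
  thus ?thesis using n2 by simp
qed

lemma spi0: "spi n p 0 mod r = 1 mod r"
proof -
  have "\<forall>x<n. (p^^(spi n p 0)) x = (p^^1) x"
    using spi_prop[of 0] n2 pow_lt p0 by simp
  thus ?thesis by (rule pow_eq_mod)
qed

lemma S0: "S k 0 mod r = k mod r"
proof -
  have "S k 0 = k * spi n p 0" unfolding S_def by (simp add: pow0)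
  hence "S k 0 mod r = (k * (spi n p 0 mod r)) mod r" by (simp add: mod_mult_right_eq)
  thus ?thesis using spi0 by (simp add: mod_mult_right_eq)
qed

lemma Sy: "S k (y mod n) mod r = (d^^y) (k mod r)"
proof (induction y arbitrary: k)
  case 0 thus ?case using S0 by simp
next
  case (Suc y)
  have one: "1 < n" using n2 by simp
  define y0 where "y0 = y mod n"
  define y1 where "y1 = Suc y mod n"
  have y0: "y0 < n" "y1 < n" using y0_def y1_def n2 by auto
  have y01: "y1 = (y0 + 1) mod n" using y0_def y1_def by (simp add: mod_Suc_eq)
  have py1: "(p^^k) y1 = ((p^^k) y0 + (p^^(S k y0)) 1) mod n" using y01 Spow[OF y0(1) one] by simp
  have "\<forall>b<n. (p^^(S k y1)) b = (p^^(S (S k y0) 1)) b"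
  proof (intro allI impI)
    fix b assume b: "b < n"
    have e1: "(p^^k) ((y1 + b) mod n) = ((p^^k) y1 + (p^^(S k y1)) b) mod n" using Spow[OF y0(2) b] .
    have "(y1 + b) mod n = (y0 + (1 + b) mod n) mod n" using y01 by (simp add: mod_add_left_eq mod_add_right_eq add.assoc)
    hence "(p^^k) ((y1 + b) mod n) = ((p^^k) y0 + (p^^(S k y0)) ((1 + b) mod n)) mod n"
      using Spow[OF y0(1), of "(1+b) mod n" k] n2 by simp
    also have "\<dots> = ((p^^k) y0 + ((p^^(S k y0)) 1 + (p^^(S (S k y0) 1)) b) mod n) mod n"
      using Spow[OF one b] by simp
    also have "\<dots> = (((p^^k) y0 + (p^^(S k y0)) 1) + (p^^(S (S k y0) 1)) b) mod n"
      by (simp add: mod_add_right_eq add.assoc)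
    also have "\<dots> = ((p^^k) y1 + (p^^(S (S k y0) 1)) b) mod n"
      using py1 by (simp add: mod_add_left_eq)
    finally have "((p^^k) y1 + (p^^(S k y1)) b) mod n = ((p^^k) y1 + (p^^(S (S k y0) 1)) b) mod n"
      using e1 by simp
    thus "(p^^(S k y1)) b = (p^^(S (S k y0) 1)) b"
      using mod_cancel_lt[OF pow_lt[OF b] pow_lt[OF b]] by blast
  qed
  hence "S k y1 mod r = S (S k y0) 1 mod r" by (rule pow_eq_mod)
  also have "\<dots> = d (S k y0)" using d_eq by simp
  also have "\<dots> = d (S k y0 mod r)" using d_mod by simp
  also have "\<dots> = d ((d^^y) (k mod r))" using Suc.IH y0_def by simp
  finally show ?case using y1_def by simp
qed

lemma d_inj: "inj_on d {..<r}"
proof (rule inj_onI)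
  fix a b assume a: "a \<in> {..<r}" and b: "b \<in> {..<r}" and ab: "d a = d b"
  have nn: "n - 1 < n" "(1 + (n - 1)) mod n = 0" using n2 by auto
  have "0 = ((p^^a) 1 + (p^^(d a)) (n-1)) mod n" using I1a[OF nn(1), of a] nn pow0 by simp
  moreover have "0 = ((p^^b) 1 + (p^^(d a)) (n-1)) mod n" using I1a[OF nn(1), of b] nn pow0 ab by simp
  ultimately have "((p^^(d a)) (n-1) + (p^^a) 1) mod n = ((p^^(d a)) (n-1) + (p^^b) 1) mod n"
    by (simp add: add.commute)
  moreover have one: "1 < n" using n2 by simp
  ultimately have "(p^^a) 1 = (p^^b) 1" using mod_cancel_lt[OF pow_lt[OF one] pow_lt[OF one]] by blast
  hence "a mod r = b mod r" by (rule orbit)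
  thus "a = b" using a b by simp
qed

lemma d_skew: "skew r d"
proof -
  have maps: "d ` {..<r} \<subseteq> {..<r}" using d_lt by auto
  have "d ` {..<r} = {..<r}" using endo_inj_surj[OF _ maps d_inj] by simp
  hence bij: "bij_betw d {..<r} {..<r}" using d_inj by (simp add: bij_betw_def)
  have d0: "d 0 = 0" using d_eq by (simp add: S_def)
  have sk: "\<forall>a<r. \<exists>i. \<forall>b<r. d ((a + b) mod r) = (d a + (d ^^ i) b) mod r"
  proof (intro allI impI)
    fix a assume a: "a < r"
    show "\<exists>i. \<forall>b<r. d ((a + b) mod r) = (d a + (d ^^ i) b) mod r"
    proof (intro exI allI impI)
      fix b assume b: "b < r"
      define x where "x = (p^^a) 1"
      have xn: "x mod n = x" using x_def pow_lt n2 by simp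
      have "d ((a + b) mod r) = d (a + b)" using d_mod by simp
      also have "\<dots> = (S a 1 + S b x) mod r" using d_eq S_add x_def by simp
      also have "\<dots> = (S a 1 mod r + S b (x mod n) mod r) mod r" using xn by (simp add: mod_add_eq)
      also have "\<dots> = (d a + (d^^x) b) mod r" using Sy[of b x] d_eq b by simp
      finally show "d ((a + b) mod r) = (d a + (d^^x) b) mod r" .
    qed
  qed
  show ?thesis unfolding skew_def using bij d0 sk by blast
qed


lemma key_step:
  assumes r2: "2 \<le> r" and r'2: "2 \<le> sord r d" and m2: "2 \<le> m"
    and mdvd: "m dvd sord r d"
    and emod: "\<forall>x < sord r d. derived r d x mod m = x mod m"
  shows "m dvd n \<and> (\<forall>x<n. p x mod m = x mod m)"
proof -
  interpret D: sk r d using d_skew r2 by unfold_locales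
  define r' where "r' = sord r d"
  define e where "e = derived r d"
  have one: "1 < n" "1 < r" "1 < r'" using n2 r2 r'2 r'_def by auto
  have eit: "(e^^a) 1 < r' \<and> (e^^a) 1 mod m = 1" for a
  proof (induction a)
    case 0 thus ?case using one m2 by simp
  next
    case (Suc a)
    have lt: "e ((e^^a) 1) < r'" using D.d_lt e_def r'_def by simp
    have "e ((e^^a) 1) mod m = (e^^a) 1 mod m" using emod Suc e_def r'_def by simp
    thus ?case using lt Suc by simp
  qed
  have dit: "(d^^j) 1 < r" for j
    using one(2) d_lt by (cases j) auto
  have stepA: "(p^^a) 1 mod m = 1" for a
  proof -
    define x where "x = (p^^a) 1"
    have xn: "x < n" using x_def pow_lt one by simp
    have h1: "d (Suc a) = (d a + spi n p x) mod r"
      using d_eq S_Suc x_def by (simp add: mod_add_left_eq)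
    have h2: "d ((a + 1) mod r) = (d (a mod r) + (d^^((e^^a) 1)) 1) mod r"
      using D.spi_d[of 1 a] one e_def by simp
    hence "(d a + spi n p x) mod r = (d a + (d^^((e^^a) 1)) 1) mod r"
      using h1 d_mod[of "Suc a"] d_mod[of a] by simp
    hence c1: "spi n p x mod r = (d^^((e^^a) 1)) 1 mod r"
      using cong_add_lcancel_nat unfolding cong_def by blast
    have "\<forall>b<n. (p^^((d^^x) 1)) b = (p^^((d^^((e^^a) 1)) 1)) b"
    proof (intro allI impI)
      fix b assume b: "b < n"
      have "(p^^((d^^x) 1)) b = (p^^(spi n p x)) b" using spi_d1[OF xn b] by simp
      also have "\<dots> = (p^^(spi n p x mod r)) b" by (rule pow_mod[OF b])
      also have "\<dots> = (p^^((d^^((e^^a) 1)) 1 mod r)) b" using c1 by simp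
      also have "\<dots> = (p^^((d^^((e^^a) 1)) 1)) b" by (rule pow_mod[OF b, symmetric])
      finally show "(p^^((d^^x) 1)) b = (p^^((d^^((e^^a) 1)) 1)) b" .
    qed
    hence "(d^^x) 1 mod r = (d^^((e^^a) 1)) 1 mod r" by (rule pow_eq_mod)
    hence "(d^^x) 1 = (d^^((e^^a) 1)) 1" using dit by simp
    hence "x mod r' = (e^^a) 1 mod r'" unfolding r'_def e_def by (rule D.orbit)
    hence "x mod r' mod m = (e^^a) 1 mod r' mod m" by simp
    moreover have md: "m dvd r'" using mdvd r'_def by simp
    ultimately have "x mod m = (e^^a) 1 mod m" using mod_mod_cancel[OF md] by simp
    thus ?thesis using eit x_def by simp
  qed
  have "\<forall>b<n. (p^^((d^^n) 1)) b = (p^^1) b" using spi_dn by simp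
  hence "(d^^n) 1 mod r = 1 mod r" by (rule pow_eq_mod)
  hence "(d^^n) 1 = (d^^0) 1" using dit one by simp
  hence "n mod r' = 0 mod r'" unfolding r'_def by (rule D.orbit)
  hence "r' dvd n" by (simp add: mod_eq_0_iff_dvd)
  hence mn: "m dvd n" using mdvd r'_def by (meson dvd_trans)
  have "\<forall>x<n. p x mod m = x mod m"
  proof (intro allI impI)
    fix x assume x: "x < n"
    have "p x = (p^^1) (x mod n)" using x by simp
    also have "\<dots> = (\<Sum>i<x. (p^^((d^^i) 1)) 1) mod n" by (rule I1)
    finally have "p x mod m = (\<Sum>i<x. (p^^((d^^i) 1)) 1) mod n mod m" by simp
    also have "\<dots> = (\<Sum>i<x. (p^^((d^^i) 1)) 1) mod m" using mod_mod_cancel[OF mn] by simp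
    also have "\<dots> = (\<Sum>i<x. (p^^((d^^i) 1)) 1 mod m) mod m" by (simp add: mod_sum_eq)
    also have "\<dots> = x mod m" using stepA by simp
    finally show "p x mod m = x mod m" .
  qed
  thus ?thesis using mn by simp
qed

end


lemma sord1: "skew 1 g \<Longrightarrow> sord 1 g = 1"
  unfolding sord_def skew_def by (intro Least_equality) auto

lemma skew1_derived: "skew 1 g \<Longrightarrow> skew 1 (derived 1 g)"
proof -
  assume g: "skew 1 g"
  have z: "derived 1 g x = 0" for x
    unfolding derived_def ssigma_def using sord1[OF g] by simp
  have "{..<(1::nat)} = {0}" by auto
  thus ?thesis unfolding skew_def using z by (simp add: bij_betw_def)
qed

lemma skew_derived:
  "skew N g \<Longrightarrow> 1 \<le> N \<Longrightarrow> skew (sord N g) (derived N g) \<and> 1 \<le> sord N g"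
proof -
  assume g: "skew N g" and N: "1 \<le> N"
  show ?thesis
  proof (cases "N = 1")
    case True thus ?thesis using g sord1 skew1_derived by simp
  next
    case False
    hence "2 \<le> N" using N by simp
    then interpret sk N g using g by unfold_locales
    show ?thesis using d_skew r_pos by simp
  qed
qed

lemma tower: "deriv_iter (Suc k) N g = deriv_iter k (sord N g) (derived N g)"
  by (induction k) (simp_all add: case_prod_beta Let_def)

lemma fstSuc: "fst (deriv_iter (Suc k) N g) = sord (fst (deriv_iter k N g)) (snd (deriv_iter k N g))"
  by (simp add: case_prod_beta Let_def)

declare deriv_iter.simps(2)[simp del]

lemma chain_skew:
  "skew N g \<Longrightarrow> 1 \<le> N \<Longrightarrow> skew (fst (deriv_iter j N g)) (snd (deriv_iter j N g)) \<and> 1 \<le> fst (deriv_iter j N g)"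
proof (induction j arbitrary: N g)
  case 0 thus ?case by simp
next
  case (Suc j)
  have "skew (sord N g) (derived N g) \<and> 1 \<le> sord N g" using skew_derived Suc.prems by blast
  thus ?case using Suc.IH tower by simp
qed

lemma one_stays: "skew 1 g \<Longrightarrow> fst (deriv_iter j 1 g) = 1"
proof (induction j arbitrary: g)
  case 0 thus ?case by simp
next
  case (Suc j)
  thus ?case using tower sord1 skew1_derived by simp
qed

lemma bound:
  "skew N g \<Longrightarrow> 1 \<le> N \<Longrightarrow> 2 \<le> fst (deriv_iter j N g) \<Longrightarrow> fst (deriv_iter j N g) + j \<le> N"
proof (induction j arbitrary: N g)
  case 0 thus ?case by simp
next
  case (Suc j)
  show ?case
  proof (cases "N = 1")
    case True
    hence "fst (deriv_iter (Suc j) N g) = 1" using one_stays Suc.prems by blast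
    thus ?thesis using Suc.prems by simp
  next
    case False
    hence N2: "2 \<le> N" using Suc.prems by simp
    then interpret sk N g using Suc.prems by unfold_locales
    have "fst (deriv_iter j r d) + j \<le> r"
      using Suc.IH[of r d] d_skew r_pos Suc.prems tower by simp
    thus ?thesis using r_lt tower by simp
  qed
qed

lemma complexity_prop:
  assumes g: "skew n p" and n2: "2 \<le> n"
  shows "2 \<le> fst (deriv_iter (complexity n p) n p) \<and> fst (deriv_iter (Suc (complexity n p)) n p) = 1"
proof -
  let ?D = "\<lambda>j. fst (deriv_iter j n p)"
  let ?P = "\<lambda>c. 2 \<le> ?D c \<and> ?D (Suc c) = 1"
  have pos: "1 \<le> ?D j" for j using chain_skew g n2 by simp
  have Dn: "?D n = 1"
  proof (rule ccontr)
    assume "?D n \<noteq> 1"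
    hence h2: "2 \<le> ?D n" using pos[of n] by simp
    have "?D n + n \<le> n" using bound[OF g _ h2] n2 by simp
    thus False using pos[of n] by simp
  qed
  have exj: "\<exists>j. ?D (Suc j) = 1" using Dn n2 by (intro exI[of _ "n - 1"]) simp
  define c where "c = (LEAST j. ?D (Suc j) = 1)"
  have c1: "?D (Suc c) = 1" unfolding c_def using exj by (rule LeastI_ex)
  have c2: "2 \<le> ?D c"
  proof (cases c)
    case 0 thus ?thesis using n2 by simp
  next
    case (Suc c0)
    have "?D (Suc c0) \<noteq> 1" using not_less_Least[of c0 "\<lambda>j. ?D (Suc j) = 1"] c_def Suc by simp
    thus ?thesis using pos[of "Suc c0"] Suc by simp
  qed
  have stay: "?D k = 1 \<Longrightarrow> ?D (k + j) = 1" for k j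
  proof (induction j)
    case (Suc j)
    have sk1: "skew 1 (snd (deriv_iter (k + j) n p))" using chain_skew[OF g, of "k+j"] Suc n2 by simp
    show ?case using fstSuc[of "k+j" n p] Suc sord1[OF sk1] by simp
  qed simp
  have uq: "c' = c" if "?P c'" for c'
  proof (rule ccontr)
    assume ne: "c' \<noteq> c"
    show False
    proof (cases "c' < c")
      case True
      hence "?D (Suc c' + (c - Suc c')) = 1" using stay that by blast
      thus False using True c2 by simp
    next
      case False
      hence "c < c'" using ne by simp
      hence "?D (Suc c + (c' - Suc c)) = 1" using stay c1 by blast
      thus False using \<open>c < c'\<close> that by simp
    qed
  qed
  have "\<exists>!c. ?P c" using c1 c2 uq by blast
  hence "?P (THE c. ?P c)" by (rule theI')
  thus ?thesis unfolding complexity_def .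
qed

lemma key:
  "skew N g \<Longrightarrow> 2 \<le> N \<Longrightarrow> 2 \<le> fst (deriv_iter (2*j) N g) \<Longrightarrow> fst (deriv_iter (Suc (2*j)) N g) = 1
   \<Longrightarrow> fst (deriv_iter (2*j) N g) dvd N \<and> (\<forall>x<N. g x mod fst (deriv_iter (2*j) N g) = x mod fst (deriv_iter (2*j) N g))"
proof (induction j arbitrary: N g)
  case 0
  then interpret sk N g by unfold_locales
  have "r = 1" using 0 tower[of 0 N g] by simp
  have "\<forall>x<N. g x = x"
  proof (intro allI impI)
    fix x assume "x < N"
    thus "g x = x" using r_id[OF \<open>x < N\<close>] \<open>r = 1\<close> by simp
  qed
  thus ?case by simp
next
  case (Suc j)
  then interpret sk N g by unfold_locales
  define m where "m = fst (deriv_iter (2 * Suc j) N g)"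
  have t1: "deriv_iter (2 * Suc j) N g = deriv_iter (Suc (2*j)) r d" using tower[of "Suc (2*j)" N g] by simp
  have t1': "deriv_iter (Suc (2 * Suc j)) N g = deriv_iter (Suc (Suc (2*j))) r d" using tower[of "Suc (Suc (2*j))" N g] by simp
  have r2: "2 \<le> r"
  proof (rule ccontr)
    assume "\<not> 2 \<le> r"
    hence "r = 1" using r_pos by simp
    hence "skew 1 d" using d_skew by simp
    hence "fst (deriv_iter (Suc (2*j)) 1 d) = 1" by (rule one_stays)
    thus False using Suc.prems t1 \<open>r = 1\<close> by simp
  qed
  interpret D: sk r d using d_skew r2 by unfold_locales
  have t2: "deriv_iter (Suc (2*j)) r d = deriv_iter (2*j) D.r D.d" using tower by simp
  have t2': "deriv_iter (Suc (Suc (2*j))) r d = deriv_iter (Suc (2*j)) D.r D.d" using tower by simp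
  have r'2: "2 \<le> D.r"
  proof (rule ccontr)
    assume "\<not> 2 \<le> D.r"
    hence "D.r = 1" using D.r_pos by simp
    hence "skew 1 D.d" using D.d_skew by simp
    hence "fst (deriv_iter (2*j) 1 D.d) = 1" by (rule one_stays)
    thus False using Suc.prems t1 t2 \<open>D.r = 1\<close> by simp
  qed
  have IH: "m dvd D.r \<and> (\<forall>x<D.r. D.d x mod m = x mod m)"
    using Suc.IH[OF D.d_skew r'2] Suc.prems t1 t1' t2 t2' m_def by simp
  have "2 \<le> m" using Suc.prems m_def by simp
  hence "m dvd N \<and> (\<forall>x<N. g x mod m = x mod m)" using key_step[OF r2 r'2] IH by blast
  thus ?case using m_def by simp
qed

theorem theorem4p3:
  fixes n :: nat and \<phi> \<psi> :: "nat \<Rightarrow> nat"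
  assumes "n \<ge> 2"
    and "skew n \<phi>" and "even (complexity n \<phi>)"
    and "skew n \<psi>" and "even (complexity n \<psi>)"
    and "\<psi> 1 = \<phi> 1"
    and "sord n \<psi> = sord n \<phi>"
    and "\<forall>x < sord n \<phi>. derived n \<psi> x = derived n \<phi> x"
    and "\<forall>x \<in> cyc_subgroup n (auto_order n \<phi>). \<psi> x = \<phi> x"
  shows "\<forall>x < n. \<psi> x = \<phi> x"
proof -
  note A = assms
  interpret F: sk n \<phi> using A by unfold_locales
  interpret G: sk n \<psi> using A by unfold_locales
  define c where "c = complexity n \<phi>"
  define m where "m = auto_order n \<phi>"
  have P: "2 \<le> fst (deriv_iter c n \<phi>) \<and> fst (deriv_iter (Suc c) n \<phi>) = 1"
    using complexity_prop[OF A(2,1)] c_def by simp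
  obtain j where j: "c = 2*j" using A(3) c_def by (metis evenE)
  have K: "m dvd n \<and> (\<forall>x<n. \<phi> x mod m = x mod m)"
    using key[OF A(2,1), of j] P j m_def c_def unfolding auto_order_def by simp
  have m2: "2 \<le> m" using P m_def c_def unfolding auto_order_def by simp
  have mn: "m dvd n" and pm: "\<And>x. x < n \<Longrightarrow> \<phi> x mod m = x mod m" using K by auto
  define r where "r = sord n \<phi>"
  have one: "1 < n" using A(1) by simp
  show ?thesis
  proof (cases "r = 1")
    case True
    have "\<forall>x<n. \<phi> x = x"
    proof (intro allI impI)
      fix x assume "x < n"
      thus "\<phi> x = x" using F.r_id[OF \<open>x < n\<close>] True r_def by simp
    qed
    moreover have "\<forall>x<n. \<psi> x = x"
    proof (intro allI impI)
      fix x assume "x < n"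
      thus "\<psi> x = x" using G.r_id[OF \<open>x < n\<close>] True r_def A(7) by simp
    qed
    ultimately show ?thesis by simp
  next
    case False
    hence r2: "1 < r" using F.r_pos r_def by simp
    have inC: "y \<in> cyc_subgroup n (auto_order n \<phi>)" if "y < n" "m dvd y" for y
    proof -
      have "y = (y div m * m) mod n" using that by simp
      thus ?thesis unfolding cyc_subgroup_def m_def[symmetric] by blast
    qed
    have ag: "\<psi> y = \<phi> y" if "y < n" "m dvd y" for y using A(9) inC that by blast
    have agpow: "(\<psi>^^i) y = (\<phi>^^i) y \<and> m dvd (\<phi>^^i) y" if "y < n" "m dvd y" for y i
    proof (induction i)
      case 0 thus ?case using that by simp
    next
      case (Suc i)
      have lt: "(\<phi>^^i) y < n" using F.pow_lt that by simp
      have "\<phi> ((\<phi>^^i) y) mod m = 0" using pm[OF lt] Suc by simp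
      thus ?case using Suc ag[OF lt] by auto
    qed
    have dd: "derived n \<psi> k = derived n \<phi> k" for k
    proof -
      have "derived n \<psi> k = derived n \<psi> (k mod sord n \<psi>)" by (rule G.d_mod)
      also have "\<dots> = derived n \<phi> (k mod r)" using A(7,8) r_def F.r_pos by simp
      also have "\<dots> = derived n \<phi> k" using F.d_mod r_def by simp
      finally show ?thesis .
    qed
    have spi1: "(p^^spi n p 1) y = (p^^(derived n p 1)) y" if "sk n p" "y < n" for p y
    proof -
      interpret H: sk n p by (rule that(1))
      have "derived n p 1 = spi n p 1 mod sord n p" using H.d_eq by (simp add: H.S_def)
      thus ?thesis using H.pow_mod[OF that(2)] by simp
    qed
    have e1: "\<psi> ((1 + y) mod n) = \<phi> ((1 + y) mod n)" if y: "y < n" "m dvd y" for y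
    proof -
      have "\<psi> ((1 + y) mod n) = (\<psi> 1 + (\<psi>^^spi n \<psi> 1) y) mod n" using G.spi_prop[OF one y(1)] .
      also have "(\<psi>^^spi n \<psi> 1) y = (\<psi>^^(derived n \<psi> 1)) y" using spi1[OF G.sk_axioms y(1)] .
      also have "\<dots> = (\<phi>^^(derived n \<phi> 1)) y" using dd agpow[OF y] by simp
      also have "\<dots> = (\<phi>^^spi n \<phi> 1) y" using spi1[OF F.sk_axioms y(1)] by simp
      also have "(\<psi> 1 + (\<phi>^^spi n \<phi> 1) y) mod n = \<phi> ((1 + y) mod n)" using F.spi_prop[OF one y(1)] A(6) by simp
      finally show ?thesis .
    qed
    have pmit: "(\<phi>^^a) 1 mod m = 1" for a
    proof (induction a)
      case 0 thus ?case using m2 by simp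
    next
      case (Suc a)
      have "(\<phi>^^a) 1 < n" using F.pow_lt one by simp
      thus ?case using pm Suc by simp
    qed
    have orb: "(\<psi>^^a) 1 = (\<phi>^^a) 1" for a
    proof (induction a)
      case 0 thus ?case by simp
    next
      case (Suc a)
      define x where "x = (\<phi>^^a) 1"
      have xn: "x < n" using F.pow_lt one x_def by simp
      have xm: "x mod m = 1" using pmit x_def by simp
      hence x1: "1 \<le> x" by (cases x) auto
      have "x = m * (x div m) + 1" using xm by (metis mod_mult_div_eq add.commute)
      hence "x - 1 = m * (x div m)" by linarith
      hence "m dvd (x - 1)" by (metis dvd_triv_left)
      moreover have "(1 + (x - 1)) mod n = x" using x1 xn by simp
      moreover have "x - 1 < n" using xn by simp
      ultimately have "\<psi> x = \<phi> x" using e1[of "x - 1"] by simp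
      thus ?case using Suc x_def by simp
    qed
    have main: "\<forall>k. (\<psi>^^k) x = (\<phi>^^k) x" if "x < n" for x
      using that
    proof (induction x)
      case 0 thus ?case using F.pow0 G.pow0 by simp
    next
      case (Suc x)
      have xn: "x < n" using Suc.prems by simp
      have e: "(1 + x) mod n = Suc x" using Suc.prems by simp
      show ?case
      proof
        fix k
        have "(\<psi>^^k) ((1 + x) mod n) = ((\<psi>^^k) 1 + (\<psi>^^(derived n \<psi> k)) x) mod n" by (rule G.I1a[OF xn])
        also have "\<dots> = ((\<phi>^^k) 1 + (\<phi>^^(derived n \<phi> k)) x) mod n" using orb dd Suc.IH[OF xn] by simp
        also have "\<dots> = (\<phi>^^k) ((1 + x) mod n)" by (rule F.I1a[OF xn, symmetric])
        finally show "(\<psi>^^k) (Suc x) = (\<phi>^^k) (Suc x)" using e by simp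
      qed
    qed
    show ?thesis
    proof (intro allI impI)
      fix x assume "x < n"
      thus "\<psi> x = \<phi> x" using main[OF \<open>x < n\<close>, rule_format, of 1] by simp
    qed
  qed
qed

end
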